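(* Let $G=(V,E,\Omega)$ be a connected finite graph with vertex set $V\subset\mathbb{R}^n$, edge set $E$ and a non-empty set $\Omega\subset V$, and let $f:\Omega\to\mathbb{R}^m$. If $u$ is a tight extension of $f$ on $G$, then $u$ is a Kirszbraun extension of $f$ on $G$, i.e. $u(x)=K(u,S(x))(x)$ for all $x\in V\setminus\Omega$ and $u(x)=f(x)$ for all $x\in\Omega$.
   Context: For $x\in V$, $S(x):=\{y\in V:(x,y)\in E\}$. $E(f)$ denotes the set of functions $V\to\mathbb{R}^m$ agreeing with $f$ on $\Omega$; $\|\cdot\|$ is the Euclidean norm. For a finite set $A\subset\mathbb{R}^n$, $g:A\to\mathbb{R}^m$ and $x\in\mathbb{R}^n\setminus A$, $K(g,A)(x)$ denotes the unique $y\in\mathbb{R}^m$ minimizing $\sup_{a\in A}\|g(a)-y\|/\|a-x\|$. For $w\in E(f)$ and $x\in V\setminus\Omega$, $Lw(x):=\sup_{y\in S(x)}\|w(y)-w(x)\|/\|y-x\|$. For $u,v\in E(f)$, $v$ is tighter than $u$ if $\max\{Lu(x):Lu(x)>Lv(x),\,x\in V\setminus\Omega\}>\max\{Lv(x):Lv(x)>Lu(x),\,x\in V\setminus\Omega\}$ (maximum over the empty set is $0$). An extension $u\in E(f)$ is a tight extension of $f$ on $G$ if no $v\in E(f)$ is tighter than $u$. *)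

theory Defs
  imports "HOL-Analysis.Analysis"
begin

definition nbhd :: "('a \<times> 'a) set \<Rightarrow> 'a \<Rightarrow> 'a set" where
  "nbhd E x = {y. (x, y) \<in> E}"

definition ext_set :: "'a set \<Rightarrow> ('a \<Rightarrow> 'b) \<Rightarrow> ('a \<Rightarrow> 'b) set" where
  "ext_set \<Omega> f = {w. \<forall>x\<in>\<Omega>. w x = f x}"

definition kirsz ::
  "(real^'n \<Rightarrow> real^'m) \<Rightarrow> (real^'n) set \<Rightarrow> real^'n \<Rightarrow> real^'m" where
  "kirsz g A x = (THE y. \<forall>z. (SUP a\<in>A. norm (g a - y) / norm (a - x))
                             \<le> (SUP a\<in>A. norm (g a - z) / norm (a - x)))"

definition lip_at ::
  "((real^'n) \<times> (real^'n)) set \<Rightarrow> (real^'n \<Rightarrow> real^'m) \<Rightarrow> real^'n \<Rightarrow> real" where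
  "lip_at E w x = (SUP y\<in>nbhd E x. norm (w y - w x) / norm (y - x))"

definition max0 :: "real set \<Rightarrow> real" where
  "max0 A = (if A = {} then 0 else Max A)"

definition tighter ::
  "(real^'n) set \<Rightarrow> ((real^'n) \<times> (real^'n)) set \<Rightarrow> (real^'n) set
    \<Rightarrow> (real^'n \<Rightarrow> real^'m) \<Rightarrow> (real^'n \<Rightarrow> real^'m) \<Rightarrow> bool" where
  "tighter V E \<Omega> v u \<longleftrightarrow>
     max0 {lip_at E u x | x. x \<in> V - \<Omega> \<and> lip_at E u x > lip_at E v x}
     > max0 {lip_at E v x | x. x \<in> V - \<Omega> \<and> lip_at E v x > lip_at E u x}"

definition tight_ext ::
  "(real^'n) set \<Rightarrow> ((real^'n) \<times> (real^'n)) set \<Rightarrow> (real^'n) set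
    \<Rightarrow> (real^'n \<Rightarrow> real^'m) \<Rightarrow> (real^'n \<Rightarrow> real^'m) \<Rightarrow> bool" where
  "tight_ext V E \<Omega> f u \<longleftrightarrow>
     u \<in> ext_set \<Omega> f \<and> \<not> (\<exists>v\<in>ext_set \<Omega> f. tighter V E \<Omega> v u)"

definition kirszbraun_ext ::
  "(real^'n) set \<Rightarrow> ((real^'n) \<times> (real^'n)) set \<Rightarrow> (real^'n) set
    \<Rightarrow> (real^'n \<Rightarrow> real^'m) \<Rightarrow> (real^'n \<Rightarrow> real^'m) \<Rightarrow> bool" where
  "kirszbraun_ext V E \<Omega> f u \<longleftrightarrow>
     (\<forall>x\<in>V - \<Omega>. u x = kirsz u (nbhd E x) x) \<and> (\<forall>x\<in>\<Omega>. u x = f x)"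

definition fin_conn_graph :: "'a set \<Rightarrow> ('a \<times> 'a) set \<Rightarrow> bool" where
  "fin_conn_graph V E \<longleftrightarrow> finite V \<and> E \<subseteq> V \<times> V \<and> sym E \<and> (\<forall>x. (x, x) \<notin> E)
     \<and> (\<forall>x\<in>V. \<forall>y\<in>V. (x, y) \<in> E\<^sup>*)"

end

theory Submission
  imports Defs
begin

lemma sup_fin_upper:
  fixes f :: "'a \<Rightarrow> real"
  assumes "finite A" "a \<in> A"
  shows "f a \<le> (SUP a\<in>A. f a)"
  using assms by (intro cSUP_upper) auto

lemma sup_fin_attained:
  fixes f :: "'a \<Rightarrow> real"
  assumes "finite A" "A \<noteq> {}"
  shows "\<exists>a\<in>A. (SUP a\<in>A. f a) = f a"
proof -
  have "(SUP a\<in>A. f a) = Max (f ` A)" using assms by (simp add: cSup_eq_Max)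
  moreover have "Max (f ` A) \<in> f ` A" using assms by (intro Max_in) auto
  ultimately show ?thesis by auto
qed

lemma sup_fin_cont:
  fixes h :: "'a \<Rightarrow> 'b::topological_space \<Rightarrow> real"
  assumes "finite A" "A \<noteq> {}" "\<forall>a\<in>A. continuous_on S (h a)"
  shows "continuous_on S (\<lambda>c. SUP a\<in>A. h a c)"
  using assms
proof (induction A rule: finite_ne_induct)
  case (singleton x)
  then show ?case by simp
next
  case (insert a A)
  have eq: "(\<lambda>c. SUP a\<in>insert a A. h a c) = (\<lambda>c. max (h a c) (SUP a\<in>A. h a c))"
  proof
    fix c
    show "(SUP a\<in>insert a A. h a c) = max (h a c) (SUP a\<in>A. h a c)"
      using insert by (subst cSUP_insert) (auto simp: sup_max)
  qed
  show ?case unfolding eq using insert by (intro continuous_on_max) auto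
qed

lemma kirsz_props:
  fixes g :: "real^'n \<Rightarrow> real^'m"
  assumes fin: "finite A" and ne: "A \<noteq> {}" and xA: "x \<notin> A"
  defines "F \<equiv> \<lambda>c. SUP a\<in>A. norm (g a - c) / norm (a - x)"
  shows "\<forall>z. F (kirsz g A x) \<le> F z"
    and "\<forall>y. (\<forall>z. F y \<le> F z) \<longrightarrow> y = kirsz g A x"
proof -
  have upper: "norm (g a - c) / norm (a - x) \<le> F c" if "a \<in> A" for a c
    unfolding F_def using fin that by (rule sup_fin_upper)
  have dpos: "norm (a - x) > 0" if "a \<in> A" for a using xA that by auto
  obtain a0 where a0: "a0 \<in> A" using ne by auto
  define d0 where "d0 = norm (a0 - x)"
  have d0: "d0 > 0" using dpos a0 d0_def by auto
  define R where "R = d0 * F (g a0)"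
  have cont: "continuous_on (cball (g a0) R) F"
    unfolding F_def using fin ne xA
    by (intro sup_fin_cont) (auto intro!: continuous_intros)
  have "g a0 \<in> cball (g a0) R"
  proof -
    have "0 \<le> norm (g a0 - g a0) / norm (a0 - x)" by simp
    also have "\<dots> \<le> F (g a0)" using upper a0 by blast
    finally show ?thesis using d0 by (simp add: R_def)
  qed
  then obtain y0 where y0: "y0 \<in> cball (g a0) R" "\<forall>y\<in>cball (g a0) R. F y0 \<le> F y"
    using continuous_attains_inf[OF compact_cball _ cont] by blast
  have exmin: "\<forall>z. F y0 \<le> F z"
  proof
    fix z
    show "F y0 \<le> F z"
    proof (cases "z \<in> cball (g a0) R")
      case True then show ?thesis using y0 by blast
    next
      case False
      then have "norm (g a0 - z) > R" by (simp add: dist_norm)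
      then have "norm (g a0 - z) / d0 > F (g a0)" using d0 by (simp add: R_def field_simps)
      moreover have "norm (g a0 - z) / d0 \<le> F z" using upper a0 d0_def by blast
      moreover have "F y0 \<le> F (g a0)" using y0 \<open>g a0 \<in> cball (g a0) R\<close> by blast
      ultimately show ?thesis by linarith
    qed
  qed
  have uniq: "y1 = y2" if h1: "\<forall>z. F y1 \<le> F z" and h2: "\<forall>z. F y2 \<le> F z" for y1 y2
  proof -
    have r: "F y1 = F y2" using h1 h2 by (meson antisym)
    define m where "m = (1/2) *\<^sub>R (y1 + y2)"
    obtain a where a: "a \<in> A" "F m = norm (g a - m) / norm (a - x)"
      using sup_fin_attained[OF fin ne] unfolding F_def by blast
    define d where "d = norm (a - x)"
    have d: "d > 0" using dpos a d_def by auto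
    define p where "p = g a - y1"
    define q where "q = g a - y2"
    have pm: "g a - m = (1/2) *\<^sub>R (p + q)" unfolding p_def q_def m_def
    proof -
      have "(1/2) *\<^sub>R ((g a - y1) + (g a - y2)) = (1/2) *\<^sub>R (2 *\<^sub>R g a) - (1/2) *\<^sub>R (y1 + y2)"
        by (simp add: scaleR_2 algebra_simps del: scaleR_half_double)
      also have "(1/2) *\<^sub>R (2 *\<^sub>R g a) = g a" by simp
      finally show "g a - (1/2) *\<^sub>R (y1 + y2) = (1/2) *\<^sub>R ((g a - y1) + (g a - y2))" by simp
    qed
    have "F y1 \<le> F m" using h1 by blast
    have np: "norm p / d \<le> F y1" using upper[OF a(1)] p_def d_def by blast
    have nq: "norm q / d \<le> F y1" using upper[OF a(1), of y2] q_def d_def r by simp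
    have nm: "norm (p + q) / 2 / d \<ge> F y1"
      using \<open>F y1 \<le> F m\<close> a(2) pm d_def by simp
    have tri: "norm (p + q) \<le> norm p + norm q" by (rule norm_triangle_ineq)
    have "norm (p + q) / 2 \<ge> F y1 * d" using nm d by (simp add: field_simps)
    moreover have "norm p \<le> F y1 * d" "norm q \<le> F y1 * d" using np nq d by (simp_all add: field_simps)
    ultimately have e1: "norm p = norm q" and e2: "norm (p + q) = norm p + norm q"
      using tri by linarith+
    then have "norm p *\<^sub>R q = norm q *\<^sub>R p" using norm_triangle_eq by blast
    then have "p = q"
      using e1 by (cases "norm p = 0") auto
    then show ?thesis unfolding p_def q_def by simp
  qed
  have P_eq: "kirsz g A x = (THE y. \<forall>z. F y \<le> F z)"
    unfolding kirsz_def F_def by simp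
  have ex1: "\<exists>!y. \<forall>z. F y \<le> F z" using exmin uniq by blast
  show "\<forall>z. F (kirsz g A x) \<le> F z"
    unfolding P_eq by (rule theI'[OF ex1])
  show "\<forall>y. (\<forall>z. F y \<le> F z) \<longrightarrow> y = kirsz g A x"
  proof (intro allI impI)
    fix y assume "\<forall>z. F y \<le> F z"
    then show "y = kirsz g A x" unfolding P_eq by (rule the1_equality[OF ex1, symmetric])
  qed
qed

theorem mainTheorem2:
  fixes V \<Omega> :: "(real^'n) set" and E :: "((real^'n) \<times> (real^'n)) set"
    and f u :: "real^'n \<Rightarrow> real^'m"
  assumes "fin_conn_graph V E"
    and "\<Omega> \<subseteq> V" and "\<Omega> \<noteq> {}"
    and "tight_ext V E \<Omega> f u"
  shows "kirszbraun_ext V E \<Omega> f u"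
proof -
  have finV: "finite V" and EV: "E \<subseteq> V \<times> V" and symE: "sym E"
    and loop: "\<And>x. (x, x) \<notin> E" and conn: "\<forall>x\<in>V. \<forall>y\<in>V. (x, y) \<in> E\<^sup>*"
    using assms(1) unfolding fin_conn_graph_def by auto
  have uext: "u \<in> ext_set \<Omega> f" and notight: "\<not> (\<exists>v\<in>ext_set \<Omega> f. tighter V E \<Omega> v u)"
    using assms(4) unfolding tight_ext_def by auto
  have finN: "finite (nbhd E z)" for z
    by (rule finite_subset[OF _ finV]) (use EV in \<open>auto simp: nbhd_def\<close>)
  have zN: "z \<notin> nbhd E z" for z using loop by (simp add: nbhd_def)
  have lipnn: "0 \<le> lip_at E w z" if False: "nbhd E z \<noteq> {}" for w :: "real^'n \<Rightarrow> real^'m" and z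
  proof -
    from False obtain y where "y \<in> nbhd E z" by auto
    have "0 \<le> norm (w y - w z) / norm (y - z)" by simp
    also have "\<dots> \<le> lip_at E w z" unfolding lip_at_def
      using finN \<open>y \<in> nbhd E z\<close> by (rule sup_fin_upper)
    finally show ?thesis .
  qed
  have K: "u x = kirsz u (nbhd E x) x" if xV: "x \<in> V - \<Omega>" for x
  proof (rule ccontr)
    assume ne: "u x \<noteq> kirsz u (nbhd E x) x"
    define K where "K = kirsz u (nbhd E x) x"
    define v where "v = u(x := K)"
    define F where "F = (\<lambda>c. SUP a\<in>nbhd E x. norm (u a - c) / norm (a - x))"
    obtain w where w: "w \<in> \<Omega>" using assms(3) by auto
    have "(x, w) \<in> E\<^sup>*" using conn xV w assms(2) by auto
    moreover have "x \<noteq> w" using xV w by auto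
    ultimately obtain y where "(x, y) \<in> E" by (metis converse_rtranclE)
    then have Nne: "nbhd E x \<noteq> {}" by (auto simp: nbhd_def)
    note kp = kirsz_props[OF finN Nne zN, of u]
    have kmin: "\<forall>z. F K \<le> F z" using kp(1) unfolding F_def K_def .
    have kuniq: "\<And>y. (\<forall>z. F y \<le> F z) \<Longrightarrow> y = K" using kp(2) unfolding F_def K_def by blast
    have Lu: "lip_at E u x = F (u x)" unfolding lip_at_def F_def by simp
    have Lv: "lip_at E v x = F K" unfolding lip_at_def F_def
      using zN[of x] by (intro SUP_cong) (auto simp: v_def)
    have "F K \<le> F (u x)" using kmin by blast
    moreover have "F K \<noteq> F (u x)"
    proof
      assume "F K = F (u x)"
      then have "\<forall>z. F (u x) \<le> F z" using kmin by simp
      then have "u x = K" by (rule kuniq)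
      then show False using ne K_def by simp
    qed
    ultimately have less: "lip_at E v x < lip_at E u x" using Lu Lv by simp
    have bound: "lip_at E v z \<le> lip_at E v x"
      if z: "z \<in> V - \<Omega>" "lip_at E v z > lip_at E u z" for z
    proof -
      have zx: "z \<noteq> x" using z less by auto
      have "nbhd E z \<noteq> {}"
      proof
        assume "nbhd E z = {}" then show False using z by (simp add: lip_at_def)
      qed
      then obtain y where y: "y \<in> nbhd E z" "lip_at E v z = norm (v y - v z) / norm (y - z)"
        using sup_fin_attained[OF finN] unfolding lip_at_def by blast
      show ?thesis
      proof (cases "y = x")
        case False
        then have "lip_at E v z = norm (u y - u z) / norm (y - z)"
          using y zx by (simp add: v_def)
        also have "\<dots> \<le> lip_at E u z" unfolding lip_at_def
          using finN y(1) by (rule sup_fin_upper)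
        finally show ?thesis using z by simp
      next
        case True
        then have "(x, z) \<in> E" using y symE by (auto simp: nbhd_def sym_def)
        then have zN': "z \<in> nbhd E x" by (simp add: nbhd_def)
        have "lip_at E v z = norm (v z - v x) / norm (z - x)"
          using y True by (simp add: norm_minus_commute)
        also have "\<dots> \<le> lip_at E v x" unfolding lip_at_def
          using finN zN' by (rule sup_fin_upper)
        finally show ?thesis .
      qed
    qed
    define S1 where "S1 = {lip_at E u z | z. z \<in> V - \<Omega> \<and> lip_at E u z > lip_at E v z}"
    define S2 where "S2 = {lip_at E v z | z. z \<in> V - \<Omega> \<and> lip_at E v z > lip_at E u z}"
    have fS1: "finite S1" unfolding S1_def using finV by (auto intro: finite_subset[of _ "(lip_at E u) ` V"])
    have fS2: "finite S2" unfolding S2_def using finV by (auto intro: finite_subset[of _ "(lip_at E v) ` V"])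
    have "lip_at E u x \<in> S1" unfolding S1_def using xV less by auto
    then have m1: "lip_at E u x \<le> max0 S1" unfolding max0_def using fS1 by auto
    have m2: "max0 S2 \<le> lip_at E v x"
    proof (cases "S2 = {}")
      case True then show ?thesis using lipnn[OF Nne] by (simp add: max0_def)
    next
      case False
      then show ?thesis unfolding max0_def using fS2 bound by (auto simp: S2_def)
    qed
    have "tighter V E \<Omega> v u" unfolding tighter_def
      using m1 m2 less S1_def S2_def by simp
    moreover have "v \<in> ext_set \<Omega> f" using uext xV by (auto simp: ext_set_def v_def)
    ultimately show False using notight by blast
  qed
  show ?thesis unfolding kirszbraun_ext_def using K uext by (auto simp: ext_set_def)
qed

end
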